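(* Let $\phi=\tilde p/p$ be a degree $(n,1)$ rational inner function as in the context and let $\alpha\in\mathbb{T}$. Then: (i) neither $\tilde p-\alpha p$ nor $\tilde p_1-\alpha p_2$ is divisible by $(z_1-\gamma)^2$ for any $\gamma\in\mathbb{T}$; (ii) $\overline{B_\alpha(\tau_k)}=\lambda_k$ for every $k=1,\dots,m$; (iii) if $L_k\subseteq\mathcal{C}_\alpha$, then there is a constant $C\neq0$ such that $\frac{\partial\phi}{\partial z_1}(\tau_k,z_2)=C$ for all $z_2\in\overline{\mathbb{D}}$ with $z_2\neq\lambda_k$.
   Context: $\mathbb{D}$ is the open unit disk, $\mathbb{T}$ the unit circle. Fix $n\ge1$. Let $p\in\mathbb{C}[z_1,z_2]$ have no zeros on $\mathbb{D}^2$, degree at most $n$ in $z_1$ and at most $1$ in $z_2$; write $p(z)=p_1(z_1)+z_2p_2(z_1)$. Set $\tilde p(z)=z_1^nz_2\overline{p(1/\bar z_1,1/\bar z_2)}=z_2\tilde p_1(z_1)+\tilde p_2(z_1)$ with $\tilde p_i(z)=z^n\overline{p_i(1/\bar z)}$. Assume $\tilde p$ has degree exactly $(n,1)$ and $p,\tilde p$ have no common factor, so $\phi=\tilde p/p$ is a degree $(n,1)$ rational inner function. The zeros of $p$ on $\mathbb{T}^2$ are distinct points $(\tau_1,\lambda_1),\dots,(\tau_m,\lambda_m)$. $B_\alpha$ is the rational function $\frac{\tilde p_1(z)-\alpha p_2(z)}{\alpha p_1(z)-\tilde p_2(z)}$ with common factors cancelled (it is a finite Blaschke product); $L_k=\{\tau_k\}\times\mathbb{T}$;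 $\mathcal{C}_\alpha=\{\zeta\in\mathbb{T}^2:\tilde p(\zeta)=\alpha p(\zeta)\}$. *)

theory Defs
  imports "HOL-Complex_Analysis.Complex_Analysis" "HOL-Computational_Algebra.Polynomial_Factorial" "HOL-Computational_Algebra.Field_as_Ring"
begin

text \<open>Reflection of a one-variable polynomial of degree at most n:
  refl_poly n q (z) = z^n * conj (q (1 / conj z)).\<close>
definition refl_poly :: "nat \<Rightarrow> complex poly \<Rightarrow> complex poly" where
  "refl_poly n q = (\<Sum>i\<le>n. monom (cnj (coeff q (n - i))) i)"

definition eval2 :: "complex poly \<Rightarrow> complex poly \<Rightarrow> complex \<Rightarrow> complex \<Rightarrow> complex" where
  "eval2 q1 q2 z1 z2 = poly q1 z1 + z2 * poly q2 z1"

definition Bal :: "complex poly \<Rightarrow> complex poly \<Rightarrow> complex poly \<Rightarrow> complex poly \<Rightarrow> complex \<Rightarrow> complex \<Rightarrow> complex" where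
  "Bal p1 p2 tp1 tp2 \<alpha> z =
     (let N = tp1 - smult \<alpha> p2; D = smult \<alpha> p1 - tp2; g = gcd N D
      in poly (N div g) z / poly (D div g) z)"

end

theory Submission
  imports Defs
begin


lemma re_ofreal_mult: "Re (complex_of_real r * z) = r * Re z" by simp

lemma im_ofreal_mult: "Im (z * complex_of_real r) = Im z * r" by simp

lemma coef_eq:
  fixes a b c d C :: complex
  assumes "\<And>z. a + z * b = C * (c + z * d)"
  shows "a = C * c" "b = C * d"
proof -
  show a: "a = C * c" using assms[of 0] by simp
  show "b = C * d" using assms[of 1] a by (simp add: algebra_simps)
qed

lemma const_dvd_pair:
  fixes c a b :: "'a::comm_semiring_1 poly"
  assumes "[:c:] dvd [:a, b:]"
  shows "c dvd b"
proof -
  from assms obtain r where r: "[:a, b:] = [:c:] * r" by (auto elim!: dvdE)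
  have "coeff [:a, b:] 1 = coeff ([:c:] * r) 1" using r by simp
  then have "b = c * coeff r 1" by simp
  then show ?thesis by simp
qed

lemma julia:
  fixes \<gamma> \<alpha> u :: complex and g :: "complex \<Rightarrow> complex" and k :: nat
  assumes \<gamma>: "norm \<gamma> = 1" and \<alpha>: "norm \<alpha> = 1" and cont: "isCont g 0"
    and bound: "\<And>w. norm (\<gamma> + w) < 1 \<Longrightarrow> norm (\<alpha> + w^k * g w) \<le> 1"
    and u: "Re u > 0"
  shows "Re (cnj \<alpha> * (-\<gamma>*u)^k * g 0) \<le> 0"
proof (rule ccontr)
  assume "\<not> ?thesis"
  then have pos: "Re (cnj \<alpha> * (-\<gamma>*u)^k * g 0) > 0" by simp
  define h where "h t = Re (cnj \<alpha> * (-\<gamma>*u)^k * g ((-\<gamma>*u) * complex_of_real t))" for t :: real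
  have c1: "isCont (\<lambda>t::real. (-\<gamma>*u) * complex_of_real t) 0" by (intro continuous_intros)
  have c2: "isCont g ((\<lambda>t::real. (-\<gamma>*u) * complex_of_real t) 0)" using cont by simp
  have cg: "isCont (g \<circ> (\<lambda>t::real. (-\<gamma>*u) * complex_of_real t)) 0" by (rule continuous_at_compose[OF c1 c2])
  have cg': "isCont (\<lambda>t::real. g ((-\<gamma>*u) * complex_of_real t)) 0" using cg by (simp add: o_def)
  have ch: "isCont h 0" unfolding h_def by (intro isCont_Re isCont_mult continuous_const cg')
  have h0: "h 0 > 0" using pos by (simp add: h_def)
  obtain d where d: "d > 0" "\<And>t. dist t 0 < d \<Longrightarrow> dist (h t) (h 0) < h 0"
    using ch h0 unfolding continuous_at_eps_delta by blast
  have u0: "u \<noteq> 0" using u by auto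
  have nu: "(cmod u)^2 > 0" using u0 by simp
  define t where "t = min (d/2) (Re u / (cmod u)^2)"
  have t0: "t > 0" using d u nu by (simp add: t_def)
  have td: "t < d" using d by (simp add: t_def)
  have "t \<le> Re u / (cmod u)^2" by (simp add: t_def)
  then have tu: "t * (cmod u)^2 \<le> Re u" using nu by (simp add: le_divide_eq)
  have ht: "h t > 0" using d(2)[of t] t0 td by (simp add: dist_real_def abs_less_iff)
  define w where "w = (-\<gamma>*u) * complex_of_real t"
  have "(cmod (1 - complex_of_real t * u))^2 = 1 - 2 * t * Re u + t^2 * (cmod u)^2"
    unfolding cmod_power2 by (simp add: power2_eq_square algebra_simps)
  also have "\<dots> \<le> 1 - t * Re u"
    using tu t0 by (simp add: power2_eq_square)
  also have "\<dots> < 1" using t0 u by simp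
  finally have "(cmod (1 - complex_of_real t * u))^2 < 1" .
  then have n1: "cmod (1 - complex_of_real t * u) < 1"
    using one_le_power[of "cmod (1 - complex_of_real t * u)" 2] by linarith
  have "\<gamma> + w = \<gamma> * (1 - complex_of_real t * u)" by (simp add: w_def algebra_simps)
  then have "norm (\<gamma> + w) < 1" using n1 \<gamma> by (simp add: norm_mult)
  then have b: "norm (\<alpha> + w^k * g w) \<le> 1" by (rule bound)
  define X where "X = w^k * g w"
  have wk: "w^k = complex_of_real (t^k) * (-\<gamma>*u)^k"
    unfolding w_def by (simp only: power_mult_distrib of_real_power mult.commute)
  have "cnj \<alpha> * X = complex_of_real (t^k) * (cnj \<alpha> * (-\<gamma>*u)^k * g w)"
    by (simp add: X_def wk)
  then have "Re (cnj \<alpha> * X) = t^k * Re (cnj \<alpha> * (-\<gamma>*u)^k * g w)" by (simp only: re_ofreal_mult)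
  also have "\<dots> = t^k * h t" by (simp only: h_def w_def)
  finally have "Re (cnj \<alpha> * X) = t^k * h t" .
  then have rX: "Re (cnj \<alpha> * X) > 0" using t0 ht by simp
  have "(cmod (\<alpha> + X))^2 = (cmod \<alpha>)^2 + (cmod X)^2 + 2 * Re (\<alpha> * cnj X)"
    unfolding cmod_power2 by (simp add: algebra_simps power2_eq_square)
  also have "Re (\<alpha> * cnj X) = Re (cnj \<alpha> * X)" by simp
  finally have eq: "(cmod (\<alpha> + X))^2 = 1 + (cmod X)^2 + 2 * Re (cnj \<alpha> * X)" using \<alpha> by simp
  have "(cmod X)^2 \<ge> 0" by simp
  then have "(cmod (\<alpha> + X))^2 > 1" using rX eq by linarith
  moreover have "(cmod (\<alpha> + X))^2 \<le> 1" using b by (simp add: X_def power_le_one)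
  ultimately show False by simp
qed

lemma half_plane_real:
  fixes B :: complex
  assumes "\<And>u. Re u > 0 \<Longrightarrow> Re (B * u) \<ge> 0"
  shows "Im B = 0" "Re B \<ge> 0"
proof -
  show "Re B \<ge> 0" using assms[of 1] by simp
  show "Im B = 0"
  proof (rule ccontr)
    assume i: "Im B \<noteq> 0"
    define x where "x = (Re B + 1) / Im B"
    have "Re (B * (1 + \<i> * complex_of_real x)) \<ge> 0" by (rule assms) simp
    moreover have "Re (B * (1 + \<i> * complex_of_real x)) = -1"
      using i by (simp add: x_def field_simps)
    ultimately show False by simp
  qed
qed

lemma sector_zero:
  fixes A :: complex and k :: nat
  assumes k: "k \<ge> 2" and h: "\<And>u. Re u > 0 \<Longrightarrow> Re (A * u^k) \<le> 0"
  shows "A = 0"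
proof -
  have kp: "real k > 0" using k by simp
  have kk: "real k \<ge> 2" using k by simp
  have c: "Re (A * cis (real k * th)) \<le> 0" if "-(pi/2) < th" "th < pi/2" for th
  proof -
    have "Re (cis th) > 0" using cos_gt_zero_pi[OF that] by simp
    from h[OF this] show ?thesis unfolding Complex.DeMoivre .
  qed
  have r: "Re (A * cis x) = Re A * cos x - Im A * sin x" for x by simp
  have pk: "pi / (2 * real k) < pi/2" using kp kk pi_gt_zero
    by (simp add: divide_less_eq field_simps)
  have pk3: "2 * pi / (3 * real k) < pi/2" using kp kk pi_gt_zero
    by (simp add: divide_less_eq field_simps)
  have pkp: "pi / (2 * real k) > 0" "2 * pi / (3 * real k) > 0" using kp by auto
  have e1: "real k * (pi / (2 * real k)) = pi/2" using kp by simp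
  have e2: "real k * (-(pi / (2 * real k))) = -(pi/2)" using kp by simp
  have e3: "real k * (2 * pi / (3 * real k)) = 2*pi/3" using kp by simp
  have "Re (A * cis (real k * (pi / (2 * real k)))) \<le> 0" by (rule c) (use pk pkp in auto)
  then have "Re (A * cis (pi/2)) \<le> 0" by (simp only: e1)
  then have i1: "Im A \<ge> 0" by (simp add: r)
  have "Re (A * cis (real k * (-(pi / (2 * real k))))) \<le> 0" by (rule c) (use pk pkp in auto)
  then have "Re (A * cis (-(pi/2))) \<le> 0" by (simp only: e2)
  then have i2: "Im A \<le> 0" by (simp add: r)
  have "Re (A * cis 0) \<le> 0" using c[of 0] by simp
  then have r1: "Re A \<le> 0" by simp
  have "Re (A * cis (real k * (2 * pi / (3 * real k)))) \<le> 0" by (rule c) (use pk3 pkp in auto)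
  then have "Re (A * cis (2*pi/3)) \<le> 0" by (simp only: e3)
  then have r2: "Re A \<ge> 0" using i1 i2 by (simp add: r cos_120)
  show ?thesis using i1 i2 r1 r2 by (simp add: complex_eq_iff)
qed



lemma prop_lemma:
  fixes a b c d :: complex
  assumes c: "c \<noteq> 0" and r: "\<And>z. norm z < 1 \<Longrightarrow> Im ((a + b*z) * cnj (c + d*z)) = 0"
  shows "b * c = a * d"
proof -
  define P0 where "P0 = a * cnj c"
  define P1 where "P1 = b * cnj c + a * cnj d"
  define P2 where "P2 = b * cnj d"
  define Q where "Q = b * cnj c - a * cnj d"
  have h0: "Im ((a + b*0) * cnj (c + d*0)) = 0" by (rule r) simp
  have h1: "Im ((a + b*(1/2)) * cnj (c + d*(1/2))) = 0" by (rule r) simp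
  have h2: "Im ((a + b*(-1/2)) * cnj (c + d*(-1/2))) = 0" by (rule r) simp
  have h3: "Im ((a + b*(\<i>/2)) * cnj (c + d*(\<i>/2))) = 0" by (rule r) (simp add: norm_divide)
  have e0: "(a + b*0) * cnj (c + d*0) = P0" by (simp add: P0_def)
  have e1: "(a + b*(1/2)) * cnj (c + d*(1/2)) = P0 + P1/2 + P2/4"
    by (simp add: P0_def P1_def P2_def algebra_simps)
  have e2: "(a + b*(-1/2)) * cnj (c + d*(-1/2)) = P0 - P1/2 + P2/4"
    by (simp add: P0_def P1_def P2_def algebra_simps)
  have e3: "(a + b*(\<i>/2)) * cnj (c + d*(\<i>/2)) = P0 + \<i>/2 * Q + P2/4"
    by (simp add: P0_def Q_def P2_def algebra_simps)
  have i0: "Im P0 = 0" using h0 unfolding e0 .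
  have i1: "Im P0 + Im P1/2 + Im P2/4 = 0" using h1 unfolding e1 by simp
  have i2: "Im P0 - Im P1/2 + Im P2/4 = 0" using h2 unfolding e2 by simp
  have i3: "Im P0 + Re Q/2 + Im P2/4 = 0" using h3 unfolding e3 by simp
  have ip1: "Im P1 = 0" and rq: "Re Q = 0" using i0 i1 i2 i3 by linarith+
  have A: "b * cnj c = cnj a * d"
    using ip1 rq by (simp add: P1_def Q_def complex_eq_iff algebra_simps)
  have B: "a * cnj c = cnj a * c"
    using i0 by (simp add: P0_def complex_eq_iff algebra_simps)
  have "(b * c - a * d) * cnj c = c * (b * cnj c) - d * (a * cnj c)" by (simp add: algebra_simps)
  also have "\<dots> = 0" using A B by (simp add: algebra_simps)
  finally show ?thesis using c by simp
qed



lemma poly_sum_upto: "degree (q::complex poly) \<le> n \<Longrightarrow> poly q z = (\<Sum>j\<le>n. coeff q j * z^j)"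
proof -
  assume a: "degree q \<le> n"
  have "poly q z = poly (\<Sum>i\<le>n. monom (coeff q i) i) z" by (simp only: poly_as_sum_of_monoms'[OF a])
  also have "\<dots> = (\<Sum>i\<le>n. poly (monom (coeff q i) i) z)" by (simp only: poly_sum)
  also have "\<dots> = (\<Sum>j\<le>n. coeff q j * z^j)" by (simp only: poly_monom)
  finally show ?thesis .
qed

lemma refl_circle:
  assumes "degree q \<le> n" "norm z = 1"
  shows "poly (refl_poly n q) z = z^n * cnj (poly q z)"
proof -
  have z0: "z \<noteq> 0" using assms by auto
  have cz: "cnj z = inverse z" using assms
  proof -
    have "z * cnj z = 1" using complex_norm_square[of z] assms(2) by simp
    then show ?thesis by (simp add: inverse_unique)
  qed
  have "poly (refl_poly n q) z = (\<Sum>i\<le>n. cnj (coeff q (n - i)) * z^i)"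
    by (simp add: refl_poly_def poly_sum poly_monom)
  also have "\<dots> = (\<Sum>j\<le>n. cnj (coeff q j) * z^(n-j))"
    by (rule sum.reindex_bij_witness[of _ "\<lambda>j. n - j" "\<lambda>j. n - j"]) auto
  also have "\<dots> = (\<Sum>j\<le>n. z^n * (cnj (coeff q j) * cnj z ^ j))"
  proof (rule sum.cong[OF refl])
    fix j assume "j \<in> {..n}"
    then have "z^n = z^(n-j) * z^j" by (simp add: power_add[symmetric])
    then show "cnj (coeff q j) * z^(n-j) = z^n * (cnj (coeff q j) * cnj z ^ j)"
      using z0 by (simp add: cz power_inverse field_simps)
  qed
  also have "\<dots> = z^n * cnj (poly q z)"
    by (simp add: poly_sum_upto[OF assms(1)] sum_distrib_left)
  finally show ?thesis .
qed

lemma cmod_add_sq: "(cmod (x + y))^2 = (cmod x)^2 + (cmod y)^2 + 2 * Re (x * cnj y)"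
  unfolding cmod_power2 by (simp add: algebra_simps power2_eq_square)

lemma mob_ineq:
  fixes a b w :: complex
  assumes "cmod b \<le> cmod a" "cmod w \<le> 1"
  shows "cmod (b + cnj w * a) \<le> cmod (a + w * b)"
proof -
  have e: "Re (b * cnj (cnj w * a)) = Re (a * cnj (w * b))"
    by (simp add: algebra_simps)
  have "(cmod (a + w * b))^2 - (cmod (b + cnj w * a))^2 = ((cmod a)^2 - (cmod b)^2) * (1 - (cmod w)^2)"
    unfolding cmod_add_sq e by (simp add: norm_mult power_mult_distrib algebra_simps)
  also have "\<dots> \<ge> 0"
    using assms by (intro mult_nonneg_nonneg) (auto intro: power_mono simp: power_le_one)
  finally have "(cmod (b + cnj w * a))^2 \<le> (cmod (a + w * b))^2" by simp
  then show ?thesis by (simp add: power2_le_iff_abs_le)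
qed

lemma poly_holo: "poly p holomorphic_on S"
  unfolding holomorphic_on_def field_differentiable_def
  by (meson has_field_derivative_at_within poly_DERIV)

locale rif =
  fixes n :: nat and p1 p2 tp1 tp2 :: "complex poly" and \<alpha> :: complex
  assumes deg1: "degree p1 \<le> n" and deg2: "degree p2 \<le> n"
    and tp1_def: "tp1 = refl_poly n p1" and tp2_def: "tp2 = refl_poly n p2"
    and nozero: "\<And>z1 z2. norm z1 < 1 \<Longrightarrow> norm z2 < 1 \<Longrightarrow> poly p1 z1 + z2 * poly p2 z1 \<noteq> 0"
    and tp1nz: "tp1 \<noteq> 0"
    and cop: "coprime [:p1, p2:] [:tp2, tp1:]"
    and alpha: "norm \<alpha> = 1"
begin

definition "NN = tp1 - smult \<alpha> p2"
definition "DD = smult \<alpha> p1 - tp2"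

lemma tp1_circ: "norm z = 1 \<Longrightarrow> poly tp1 z = z^n * cnj (poly p1 z)"
  unfolding tp1_def by (rule refl_circle[OF deg1])
lemma tp2_circ: "norm z = 1 \<Longrightarrow> poly tp2 z = z^n * cnj (poly p2 z)"
  unfolding tp2_def by (rule refl_circle[OF deg2])

lemma common_root:
  assumes g: "norm \<gamma> = 1" and r1: "poly p1 \<gamma> = 0" and r2: "poly p2 \<gamma> = 0"
  shows False
proof -
  let ?q = "[:-\<gamma>, 1:]"
  have t1: "poly tp1 \<gamma> = 0" and t2: "poly tp2 \<gamma> = 0"
    using tp1_circ[OF g] tp2_circ[OF g] r1 r2 by auto
  have d: "?q dvd p1" "?q dvd p2" "?q dvd tp1" "?q dvd tp2"
    using r1 r2 t1 t2 by (simp_all add: poly_eq_0_iff_dvd)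
  have dd: "[:?q:] dvd [:a, b:]" if "?q dvd a" "?q dvd b" for a b :: "complex poly"
  proof -
    from that obtain a' b' where "a = ?q * a'" "b = ?q * b'" by (auto elim!: dvdE)
    then have "[:a, b:] = [:?q:] * [:a', b':]" by simp
    then show ?thesis by (rule dvdI)
  qed
  have "is_unit [:?q:]"
    by (rule coprime_common_divisor[OF cop dd[OF d(1,2)] dd[OF d(4,3)]])
  then have "is_unit ?q" by (simp add: is_unit_poly_iff)
  then show False by (auto simp: is_unit_poly_iff)
qed

lemma p2_le_p1:
  assumes "norm z \<le> 1"
  shows "norm (poly p2 z) \<le> norm (poly p1 z)"
proof -
  have inner: "ball 0 1 \<subseteq> {z. norm (poly p2 z) \<le> norm (poly p1 z)}"
  proof
    fix z :: complex assume "z \<in> ball 0 1"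
    then have z: "norm z < 1" by simp
    show "z \<in> {z. norm (poly p2 z) \<le> norm (poly p1 z)}"
    proof (rule ccontr)
      assume "z \<notin> {z. norm (poly p2 z) \<le> norm (poly p1 z)}"
      then have lt: "norm (poly p1 z) < norm (poly p2 z)" by simp
      then have nz: "poly p2 z \<noteq> 0" by auto
      define w where "w = - poly p1 z / poly p2 z"
      have "norm w < 1" using lt nz by (simp add: w_def norm_divide divide_less_eq)
      moreover have "poly p1 z + w * poly p2 z = 0" using nz by (simp add: w_def)
      ultimately show False using nozero[OF z] by blast
    qed
  qed
  have cl: "closed {z. norm (poly p2 z) \<le> norm (poly p1 z)}"
    by (intro closed_Collect_le continuous_intros)
  have "cball 0 1 \<subseteq> {z. norm (poly p2 z) \<le> norm (poly p1 z)}"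
    using closure_minimal[OF inner cl] by simp
  then show ?thesis using assms by auto
qed

lemma p_nz:
  assumes z1: "norm z1 \<le> 1" and z2: "norm z2 < 1"
  shows "poly p1 z1 + z2 * poly p2 z1 \<noteq> 0"
proof
  assume e: "poly p1 z1 + z2 * poly p2 z1 = 0"
  have le: "norm (poly p2 z1) \<le> norm (poly p1 z1)" by (rule p2_le_p1[OF z1])
  have "norm (poly p1 z1) = norm z2 * norm (poly p2 z1)"
    using e by (metis add_eq_0_iff norm_minus_cancel norm_mult)
  also have "\<dots> \<le> norm z2 * norm (poly p1 z1)" using le by (simp add: mult_left_mono)
  finally have c: "norm (poly p1 z1) \<le> norm z2 * norm (poly p1 z1)" .
  have "poly p1 z1 = 0"
  proof (rule ccontr)
    assume "poly p1 z1 \<noteq> 0"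
    then have "norm z2 * norm (poly p1 z1) < 1 * norm (poly p1 z1)"
      using z2 by (intro mult_strict_right_mono) auto
    then show False using c by simp
  qed
  moreover then have "poly p2 z1 = 0" using le by simp
  moreover have "norm z1 = 1" 
  proof (rule ccontr)
    assume "norm z1 \<noteq> 1" then have "norm z1 < 1" using z1 by simp
    then show False using nozero[OF _ z2] e by blast
  qed
  ultimately show False using common_root by blast
qed


lemma phi_le:
  assumes z1: "norm z1 < 1" and z2: "norm z2 < 1"
  shows "norm (poly tp2 z1 + z2 * poly tp1 z1) \<le> norm (poly p1 z1 + z2 * poly p2 z1)"
proof -
  define f where "f = (\<lambda>z. (poly tp2 z + z2 * poly tp1 z) / (poly p1 z + z2 * poly p2 z))"
  have nz: "poly p1 z + z2 * poly p2 z \<noteq> 0" if "z \<in> cball 0 1" for z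
    using p_nz[OF _ z2] that by auto
  have "norm (f z1) \<le> 1"
  proof (rule maximum_modulus_frontier[where f=f and S="ball 0 1" and \<xi>=z1])
    show "f holomorphic_on interior (ball 0 1)"
      unfolding f_def using nz by (intro holomorphic_intros poly_holo) auto
    show "continuous_on (closure (ball 0 1)) f"
      unfolding f_def using nz by (intro continuous_intros) auto
    show "bounded (ball (0::complex) 1)" by simp
    show "z1 \<in> ball 0 1" using z1 by simp
  next
    fix z :: complex assume "z \<in> frontier (ball 0 1)"
    then have z: "norm z = 1" by simp
    have "poly tp2 z + z2 * poly tp1 z = z^n * cnj (poly p2 z + cnj z2 * poly p1 z)"
      using tp1_circ[OF z] tp2_circ[OF z] by (simp add: algebra_simps)
    then have "norm (poly tp2 z + z2 * poly tp1 z) = norm (z^n) * norm (cnj (poly p2 z + cnj z2 * poly p1 z))"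
      by (simp only: norm_mult)
    also have "\<dots> = norm (poly p2 z + cnj z2 * poly p1 z)"
      using z by (simp only: norm_power complex_mod_cnj) simp
    also have "\<dots> \<le> norm (poly p1 z + z2 * poly p2 z)"
      using p2_le_p1[of z] z z2 by (intro mob_ineq) auto
    finally show "norm (f z) \<le> 1"
      unfolding f_def using nz[of z] z by (simp add: norm_divide divide_le_eq)
  qed
  then show ?thesis
    unfolding f_def using nz[of z1] z1 by (simp add: norm_divide divide_le_eq)
qed

lemma ND_circ:
  assumes z: "norm z = 1"
  shows "z^n * cnj (poly DD z) = cnj \<alpha> * poly NN z" and "norm (poly DD z) = norm (poly NN z)"
proof -
  have aa: "cnj \<alpha> * \<alpha> = 1" using alpha complex_norm_square[of \<alpha>] by (simp add: mult.commute)
  have zz: "z^n * cnj z ^ n = 1" using z complex_norm_square[of z] by (simp add: power_mult_distrib[symmetric])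
  have "z^n * cnj (poly DD z) = cnj \<alpha> * (z^n * cnj (poly p1 z)) - (z^n * cnj z ^ n) * poly p2 z"
    unfolding DD_def using tp2_circ[OF z] by (simp add: algebra_simps)
  also have "\<dots> = cnj \<alpha> * poly NN z"
    unfolding NN_def using tp1_circ[OF z] zz aa by (simp add: algebra_simps)
  finally show 1: "z^n * cnj (poly DD z) = cnj \<alpha> * poly NN z" .
  have "norm (z^n * cnj (poly DD z)) = norm (poly DD z)" using z by (simp add: norm_mult norm_power)
  then show "norm (poly DD z) = norm (poly NN z)" using 1 alpha by (simp add: norm_mult)
qed

lemma ND_not_prop:
  assumes z2: "norm z2 < 1"
  shows "smult z2 NN - DD \<noteq> 0"
proof
  assume e: "smult z2 NN - DD = 0"
  have "poly NN z = 0" if z: "norm z = 1" for z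
  proof -
    have "poly DD z = z2 * poly NN z" using arg_cong[OF e, of "\<lambda>q. poly q z"] by simp
    then have "norm (poly NN z) = norm z2 * norm (poly NN z)"
      using ND_circ(2)[OF z] by (simp add: norm_mult)
    then show ?thesis using z2
      by (metis mult_cancel_right1 norm_eq_zero order_less_irrefl)
  qed
  then have "sphere 0 1 \<subseteq> {z. poly NN z = 0}" by auto
  moreover have "infinite (sphere (0::complex) 1)"
  proof
    assume f: "finite (sphere (0::complex) 1)"
    have "connected (sphere (0::complex) 1)" by (rule connected_sphere) auto
    then have "sphere (0::complex) 1 = {} \<or> (\<exists>a. sphere (0::complex) 1 = {a})"
      using connected_finite_iff_sing[of "sphere (0::complex) 1"] f by blast
    moreover have "1 \<in> sphere (0::complex) 1" "-1 \<in> sphere (0::complex) 1" by auto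
    ultimately have "(1::complex) = -1" by (metis empty_iff singletonD)
    then show False by simp
  qed
  ultimately have "NN = 0" using poly_roots_finite finite_subset by blast
  then have D0: "DD = 0" using e by simp
  have "tp1 = smult \<alpha> p2" "tp2 = smult \<alpha> p1" using \<open>NN = 0\<close> D0 by (simp_all add: NN_def DD_def)
  then have "[:tp2, tp1:] = [:[:\<alpha>:]:] * [:p1, p2:]" by simp
  then have "coprime [:p1, p2:] ([:[:\<alpha>:]:] * [:p1, p2:])" using cop by simp
  then have "coprime [:p1, p2:] [:p1, p2:]" by (simp only: coprime_mult_right_iff)
  then have "is_unit [:p1, p2:]" by (simp only: coprime_self)
  then have "p2 = 0" by (auto simp: is_unit_poly_iff)
  then show False using tp1nz \<open>tp1 = smult \<alpha> p2\<close> by simp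
qed


lemma core:
  assumes g: "norm \<gamma> = 1" and N1: "NN = [:-\<gamma>,1:] * N1" and D1: "DD = [:-\<gamma>,1:] * D1"
  shows "\<exists>C. C \<noteq> 0 \<and> (\<forall>z. - poly D1 \<gamma> + z * poly N1 \<gamma> = C * (poly p1 \<gamma> + z * poly p2 \<gamma>))"
proof -
  define E where "E = cnj \<alpha> * \<gamma>"
  have key: "Im (E * (- poly D1 \<gamma> + z2 * poly N1 \<gamma>) * cnj (poly p1 \<gamma> + z2 * poly p2 \<gamma>)) = 0
          \<and> - poly D1 \<gamma> + z2 * poly N1 \<gamma> \<noteq> 0" if z2: "norm z2 < 1" for z2
  proof -
    define P where "P = p1 + smult z2 p2"
    define T where "T = tp2 + smult z2 tp1"
    define S where "S = smult z2 N1 - D1"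
    have polyP: "poly P z = poly p1 z + z2 * poly p2 z" for z by (simp add: P_def)
    have polyT: "poly T z = poly tp2 z + z2 * poly tp1 z" for z by (simp add: T_def)
    have SND: "smult z2 NN - DD = [:-\<gamma>,1:] * S"
      unfolding N1 D1 S_def by (simp only: right_diff_distrib mult_smult_right)
    have TP: "poly T z = \<alpha> * poly P z + poly (smult z2 NN - DD) z" for z
      by (simp add: polyT polyP NN_def DD_def algebra_simps)
    have Tw: "poly T (\<gamma> + w) = \<alpha> * poly P (\<gamma> + w) + w * poly S (\<gamma> + w)" for w
      unfolding TP SND by (simp add: algebra_simps)
    have bnd: "norm (poly T z1) \<le> norm (poly P z1)" if "norm z1 < 1" for z1
      unfolding polyT polyP by (rule phi_le[OF that z2])
    have Pnz: "poly P z1 \<noteq> 0" if "norm z1 \<le> 1" for z1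
      unfolding polyP by (rule p_nz[OF that z2])
    have Pg: "poly P \<gamma> \<noteq> 0" using Pnz g by simp
    have Snz: "S \<noteq> 0" using ND_not_prop[OF z2] SND by auto
    have Sg: "poly S \<gamma> = - poly D1 \<gamma> + z2 * poly N1 \<gamma>" by (simp add: S_def)
    have contg: "isCont (\<lambda>w. poly Q (\<gamma> + w) / poly P (\<gamma> + w)) 0" for Q
      using Pg by (intro continuous_intros) auto
    have bound_gen: "norm (\<alpha> + w^k * (poly Q (\<gamma> + w) / poly P (\<gamma> + w))) \<le> 1"
      if QS: "S = [:-\<gamma>,1:]^(k - 1) * Q" and k: "k \<ge> 1" and w: "norm (\<gamma> + w) < 1" for Q k w
    proof -
      have Pw: "poly P (\<gamma> + w) \<noteq> 0" using Pnz w by simp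
      obtain j where kj: "k = Suc j" using k by (cases k) auto
      have l: "poly [:-\<gamma>,1:] (\<gamma> + w) = w" by simp
      have "poly S (\<gamma> + w) = w^j * poly Q (\<gamma> + w)"
        unfolding QS kj by (simp only: poly_mult poly_power l diff_Suc_1)
      then have ws: "w * poly S (\<gamma> + w) = w^k * poly Q (\<gamma> + w)"
        by (simp add: kj)
      have "poly T (\<gamma> + w) / poly P (\<gamma> + w) = \<alpha> + w * poly S (\<gamma> + w) / poly P (\<gamma> + w)"
        using Pw unfolding Tw by (simp add: add_divide_distrib)
      then have "poly T (\<gamma> + w) / poly P (\<gamma> + w) = \<alpha> + w^k * (poly Q (\<gamma> + w) / poly P (\<gamma> + w))"
        by (simp add: ws)
      moreover have "norm (poly T (\<gamma> + w) / poly P (\<gamma> + w)) \<le> 1"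
        using bnd[OF w] Pw by (simp add: norm_divide divide_le_eq)
      ultimately show ?thesis by simp
    qed
    have SgNZ: "poly S \<gamma> \<noteq> 0"
    proof
      assume S0: "poly S \<gamma> = 0"
      obtain Q where QD: "S = [:-\<gamma>,1:]^(order \<gamma> S) * Q" and Qn: "\<not> [:-\<gamma>,1:] dvd Q"
        using order_decomp[OF Snz] by blast
      have Qg: "poly Q \<gamma> \<noteq> 0" using Qn by (simp add: poly_eq_0_iff_dvd)
      define m where "m = order \<gamma> S"
      have m1: "m \<ge> 1"
      proof (rule ccontr)
        assume "\<not> m \<ge> 1" then have "m = 0" by simp
        then have "S = Q" using QD by (simp add: m_def)
        then show False using S0 Qg by simp
      qed
      define k where "k = m + 1"
      have k2: "k \<ge> 2" using m1 by (simp add: k_def)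
      have QS: "S = [:-\<gamma>,1:]^(k - 1) * Q" using QD by (simp add: k_def m_def)
      define A where "A = cnj \<alpha> * (-\<gamma>)^k * (poly Q \<gamma> / poly P \<gamma>)"
      have "Re (A * u^k) \<le> 0" if u: "Re u > 0" for u
      proof -
        have "Re (cnj \<alpha> * (-\<gamma>*u)^k * (poly Q (\<gamma> + 0) / poly P (\<gamma> + 0))) \<le> 0"
          by (rule julia[OF g alpha contg bound_gen[OF QS] u]) (use k2 in auto)
        moreover have "(-\<gamma>*u)^k = (-\<gamma>)^k * u^k" by (simp only: power_mult_distrib)
        ultimately show ?thesis by (simp add: A_def algebra_simps del: mult_minus_left)
      qed
      then have "A = 0" by (rule sector_zero[OF k2])
      moreover have "A \<noteq> 0" using Qg Pg alpha g by (auto simp: A_def)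
      ultimately show False by simp
    qed
    have QS1: "S = [:-\<gamma>,1:]^(1 - 1) * S" by simp
    define G where "G = poly S \<gamma> / poly P \<gamma>"
    have "Re ((E * G) * u) \<ge> 0" if u: "Re u > 0" for u
    proof -
      have "Re (cnj \<alpha> * (-\<gamma>*u)^1 * (poly S (\<gamma> + 0) / poly P (\<gamma> + 0))) \<le> 0"
        by (rule julia[OF g alpha contg bound_gen[OF QS1] u]) auto
      then show ?thesis by (simp add: E_def G_def algebra_simps)
    qed
    then have imEG: "Im (E * G) = 0" by (rule half_plane_real)
    have eqX: "E * (poly S \<gamma>) * cnj (poly P \<gamma>) = (E * G) * complex_of_real ((cmod (poly P \<gamma>))^2)"
      using Pg unfolding complex_norm_square by (simp add: G_def field_simps)
    have "Im (E * (poly S \<gamma>) * cnj (poly P \<gamma>)) = Im (E * G) * (cmod (poly P \<gamma>))^2"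
      unfolding eqX by (rule im_ofreal_mult)
    then have "Im (E * (poly S \<gamma>) * cnj (poly P \<gamma>)) = 0" using imEG by simp
    then show ?thesis using SgNZ by (simp add: Sg polyP)
  qed
  have E0: "E \<noteq> 0" using alpha g by (auto simp: E_def)
  have c0: "poly p1 \<gamma> \<noteq> 0" using p_nz[of \<gamma> 0] g by simp
  have "(E * poly N1 \<gamma>) * poly p1 \<gamma> = (E * - poly D1 \<gamma>) * poly p2 \<gamma>"
  proof (rule prop_lemma[OF c0])
    fix z :: complex assume "norm z < 1"
    from key[OF this] show "Im ((E * - poly D1 \<gamma> + E * poly N1 \<gamma> * z) * cnj (poly p1 \<gamma> + poly p2 \<gamma> * z)) = 0"
      by (simp add: algebra_simps)
  qed
  then have "E * (poly N1 \<gamma> * poly p1 \<gamma>) = E * (- poly D1 \<gamma> * poly p2 \<gamma>)" by (simp only: mult.assoc)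
  then have NP: "poly N1 \<gamma> * poly p1 \<gamma> = - poly D1 \<gamma> * poly p2 \<gamma>" using E0 mult_left_cancel by blast
  have D0: "poly D1 \<gamma> \<noteq> 0" using key[of 0] by simp
  define C where "C = - poly D1 \<gamma> / poly p1 \<gamma>"
  have "C \<noteq> 0" using D0 c0 by (simp add: C_def)
  moreover have "- poly D1 \<gamma> + z * poly N1 \<gamma> = C * (poly p1 \<gamma> + z * poly p2 \<gamma>)" for z
  proof -
    have "poly N1 \<gamma> = C * poly p2 \<gamma>" using NP c0 by (simp add: C_def field_simps)
    moreover have "- poly D1 \<gamma> = C * poly p1 \<gamma>" using c0 by (simp add: C_def)
    ultimately show ?thesis by (simp add: algebra_simps)
  qed
  ultimately show ?thesis by blast
qed


lemma no_common_p: "norm \<tau> = 1 \<Longrightarrow> poly p2 \<tau> = 0 \<Longrightarrow> poly NN \<tau> = 0 \<Longrightarrow> False"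
proof -
  assume t: "norm \<tau> = 1" and p2: "poly p2 \<tau> = 0" and N: "poly NN \<tau> = 0"
  have "poly tp1 \<tau> = 0" using N p2 by (simp add: NN_def)
  then have "\<tau>^n * cnj (poly p1 \<tau>) = 0" using tp1_circ[OF t] by simp
  then have "poly p1 \<tau> = 0" using t by auto
  then show False using common_root[OF t _ p2] by blast
qed

lemma part1:
  assumes g: "norm \<gamma> = 1"
  shows "\<not> [:-\<gamma>, 1:]^2 dvd NN"
proof
  assume "[:-\<gamma>, 1:]^2 dvd NN"
  then obtain K where K: "NN = [:-\<gamma>, 1:]^2 * K" by (auto elim!: dvdE)
  define N1 where "N1 = [:-\<gamma>, 1:] * K"
  have N1: "NN = [:-\<gamma>, 1:] * N1" using K by (simp only: N1_def power2_eq_square mult.assoc)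
  have N0: "poly NN \<gamma> = 0" using N1 by simp
  then have "poly DD \<gamma> = 0" using ND_circ(2)[OF g] by simp
  then obtain D1 where D1: "DD = [:-\<gamma>, 1:] * D1" by (auto simp: poly_eq_0_iff_dvd elim!: dvdE)
  obtain C where C: "C \<noteq> 0" "\<And>z. - poly D1 \<gamma> + z * poly N1 \<gamma> = C * (poly p1 \<gamma> + z * poly p2 \<gamma>)"
    using core[OF g N1 D1] by blast
  have "poly N1 \<gamma> = C * poly p2 \<gamma>" by (rule coef_eq(2)[OF C(2)])
  moreover have "poly N1 \<gamma> = 0" by (simp add: N1_def)
  ultimately have "poly p2 \<gamma> = 0" using C(1) by simp
  then show False using no_common_p[OF g _ N0] by blast
qed

lemma bal_lemma:
  fixes N D N1 D1 :: "complex poly"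
  assumes ND: "N * D1 = D * N1" and Nn: "N \<noteq> 0" and N1t: "poly N1 t \<noteq> 0"
    and D1t: "poly D1 t = l * poly N1 t" and l: "l \<noteq> 0"
  shows "poly (N div gcd N D) t / poly (D div gcd N D) t = 1 / l"
proof -
  define g where "g = gcd N D"
  define N' where "N' = N div g"
  define D' where "D' = D div g"
  have gN: "N = g * N'" by (simp add: N'_def g_def)
  have gD: "D = g * D'" by (simp add: D'_def g_def)
  have g0: "g \<noteq> 0" using Nn by (simp add: g_def)
  have "g * (N' * D1) = g * (D' * N1)" using ND unfolding gN gD by (simp add: algebra_simps)
  then have e: "N' * D1 = D' * N1" using g0 by simp
  have cop: "coprime N' D'" unfolding N'_def D'_def g_def by (rule div_gcd_coprime) (use Nn in simp)
  have et: "poly N' t * (l * poly N1 t) = poly D' t * poly N1 t"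
    using arg_cong[OF e, of "\<lambda>q. poly q t"] D1t by simp
  then have Dl: "poly D' t = l * poly N' t" using N1t by (simp add: algebra_simps)
  have "poly N' t \<noteq> 0"
  proof
    assume N0: "poly N' t = 0"
    then have "poly D' t = 0" using Dl by simp
    then have "[:-t,1:] dvd N'" "[:-t,1:] dvd D'" using N0 by (simp_all add: poly_eq_0_iff_dvd)
    then have "is_unit [:-t,1:]" using coprime_common_divisor[OF cop] by blast
    then show False by (auto simp: is_unit_poly_iff)
  qed
  then show ?thesis using Dl l unfolding N'_def D'_def g_def by (simp add: field_simps)
qed

lemma part2:
  assumes t: "norm \<tau> = 1" and l: "norm lam = 1" and z: "poly p1 \<tau> + lam * poly p2 \<tau> = 0"
  shows "cnj (Bal p1 p2 tp1 tp2 \<alpha> \<tau>) = lam"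
proof -
  have ll: "lam * cnj lam = 1" using l complex_norm_square[of lam] by simp
  have l0: "lam \<noteq> 0" using l by auto
  have p1: "poly p1 \<tau> = - lam * poly p2 \<tau>" using z by (simp add: algebra_simps eq_neg_iff_add_eq_0)
  have p2: "poly p2 \<tau> \<noteq> 0"
  proof
    assume "poly p2 \<tau> = 0"
    then show False using common_root[OF t] p1 by simp
  qed
  have c1: "cnj (poly p1 \<tau>) = - cnj lam * cnj (poly p2 \<tau>)" using p1 by simp
  have "lam * poly NN \<tau> = lam * (\<tau>^n * cnj (poly p1 \<tau>)) - lam * \<alpha> * poly p2 \<tau>"
    by (simp add: NN_def tp1_circ[OF t] algebra_simps)
  also have "\<dots> = - (lam * cnj lam) * \<tau>^n * cnj (poly p2 \<tau>) - lam * \<alpha> * poly p2 \<tau>"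
    by (simp add: c1 algebra_simps)
  also have "\<dots> = poly DD \<tau>" using ll p1 by (simp add: DD_def tp2_circ[OF t] algebra_simps)
  finally have DN: "poly DD \<tau> = lam * poly NN \<tau>" by simp
  have NN0: "NN \<noteq> 0"
  proof
    assume N: "NN = 0"
    then have "[:-\<tau>, 1:]^2 dvd NN" by simp
    then show False using part1[OF t] by simp
  qed
  have key: "poly (NN div gcd NN DD) \<tau> / poly (DD div gcd NN DD) \<tau> = 1 / lam"
  proof (cases "poly NN \<tau> = 0")
    case False
    show ?thesis by (rule bal_lemma[OF _ NN0 False DN l0]) (simp add: mult.commute)
  next
    case True
    then have "poly DD \<tau> = 0" using DN by simp
    then obtain D1 where D1: "DD = [:-\<tau>, 1:] * D1" by (auto simp: poly_eq_0_iff_dvd elim!: dvdE)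
    obtain N1 where N1: "NN = [:-\<tau>, 1:] * N1" using True by (auto simp: poly_eq_0_iff_dvd elim!: dvdE)
    obtain C where C: "C \<noteq> 0" "\<And>z. - poly D1 \<tau> + z * poly N1 \<tau> = C * (poly p1 \<tau> + z * poly p2 \<tau>)"
      using core[OF t N1 D1] by blast
    have c1: "poly N1 \<tau> = C * poly p2 \<tau>" by (rule coef_eq(2)[OF C(2)])
    have c2: "- poly D1 \<tau> = C * poly p1 \<tau>" by (rule coef_eq(1)[OF C(2)])
    have n1: "poly N1 \<tau> \<noteq> 0" using c1 C(1) p2 by simp
    have d1: "poly D1 \<tau> = lam * poly N1 \<tau>" using c1 c2 p1 by (simp add: algebra_simps)
    show ?thesis by (rule bal_lemma[OF _ NN0 n1 d1 l0]) (simp add: N1 D1 algebra_simps)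
  qed
  have "Bal p1 p2 tp1 tp2 \<alpha> \<tau> = 1 / lam"
    unfolding Bal_def Let_def key[unfolded NN_def DD_def] ..
  then have "cnj (Bal p1 p2 tp1 tp2 \<alpha> \<tau>) = 1 / cnj lam" by simp
  also have "\<dots> = lam"
  proof -
    have "cnj lam \<noteq> 0" using l0 by simp
    then show ?thesis using ll by (simp add: divide_eq_eq mult.commute)
  qed
  finally show ?thesis .
qed

lemma part3:
  assumes t: "norm \<tau> = 1" and l: "norm lam = 1" and z: "poly p1 \<tau> + lam * poly p2 \<tau> = 0"
    and L: "\<And>z2. norm z2 = 1 \<Longrightarrow> poly tp2 \<tau> + z2 * poly tp1 \<tau> = \<alpha> * (poly p1 \<tau> + z2 * poly p2 \<tau>)"
  shows "\<exists>C. C \<noteq> 0 \<and> (\<forall>z2. norm z2 \<le> 1 \<and> z2 \<noteq> lam \<longrightarrow>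
           ((\<lambda>w. (poly tp2 w + z2 * poly tp1 w) / (poly p1 w + z2 * poly p2 w)) has_field_derivative C) (at \<tau>))"
proof -
  have p1: "poly p1 \<tau> = - lam * poly p2 \<tau>" using z by (simp add: algebra_simps eq_neg_iff_add_eq_0)
  have p2: "poly p2 \<tau> \<noteq> 0"
  proof
    assume "poly p2 \<tau> = 0"
    then show False using common_root[OF t] p1 by simp
  qed
  have Lz: "- poly DD \<tau> + z2 * poly NN \<tau> = 0" if "norm z2 = 1" for z2
    using L[OF that] by (simp add: DD_def NN_def algebra_simps)
  have "- poly DD \<tau> + 1 * poly NN \<tau> = 0" "- poly DD \<tau> + (-1) * poly NN \<tau> = 0"
    by (rule Lz; simp)+
  then have N0: "poly NN \<tau> = 0" and D0: "poly DD \<tau> = 0" by simp_all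
  obtain D1 where D1: "DD = [:-\<tau>, 1:] * D1" using D0 by (auto simp: poly_eq_0_iff_dvd elim!: dvdE)
  obtain N1 where N1: "NN = [:-\<tau>, 1:] * N1" using N0 by (auto simp: poly_eq_0_iff_dvd elim!: dvdE)
  obtain C where C: "C \<noteq> 0" "\<And>z. - poly D1 \<tau> + z * poly N1 \<tau> = C * (poly p1 \<tau> + z * poly p2 \<tau>)"
    using core[OF t N1 D1] by blast
  have deriv: "((\<lambda>w. (poly tp2 w + z2 * poly tp1 w) / (poly p1 w + z2 * poly p2 w)) has_field_derivative C) (at \<tau>)"
    if z2: "norm z2 \<le> 1" "z2 \<noteq> lam" for z2
  proof -
    define P where "P = p1 + smult z2 p2"
    define S where "S = smult z2 N1 - D1"
    have Pt: "poly P \<tau> = (z2 - lam) * poly p2 \<tau>" by (simp add: P_def p1 algebra_simps)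
    have P0: "poly P \<tau> \<noteq> 0" using Pt p2 z2(2) by simp
    have SND: "smult z2 NN - DD = [:-\<tau>,1:] * S"
      unfolding N1 D1 S_def by (simp only: right_diff_distrib mult_smult_right)
    have Tw: "poly tp2 w + z2 * poly tp1 w = \<alpha> * poly P w + (w - \<tau>) * poly S w" for w
    proof -
      have "poly tp2 w + z2 * poly tp1 w = \<alpha> * poly P w + poly (smult z2 NN - DD) w"
        by (simp add: P_def NN_def DD_def algebra_simps)
      then show ?thesis unfolding SND by (simp add: algebra_simps)
    qed
    have fe: "(\<lambda>w. (poly tp2 w + z2 * poly tp1 w) / (poly p1 w + z2 * poly p2 w))
            = (\<lambda>w. (\<alpha> * poly P w + (w - \<tau>) * poly S w) / poly P w)"
      by (simp add: Tw P_def)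
    have dl: "((\<lambda>x. x - \<tau>) has_field_derivative 1) (at \<tau>)"
      using DERIV_diff[OF DERIV_ident DERIV_const[of \<tau>]] by simp
    have dT: "((\<lambda>w. \<alpha> * poly P w + (w - \<tau>) * poly S w) has_field_derivative
              (\<alpha> * poly (pderiv P) \<tau> + (1 * poly S \<tau> + poly (pderiv S) \<tau> * (\<tau> - \<tau>)))) (at \<tau>)"
      using dl by (intro DERIV_add DERIV_cmult DERIV_mult poly_DERIV)
    have dP: "(poly P has_field_derivative poly (pderiv P) \<tau>) (at \<tau>)" by (rule poly_DERIV)
    have dd: "((\<lambda>w. (\<alpha> * poly P w + (w - \<tau>) * poly S w) / poly P w) has_field_derivative
       ((\<alpha> * poly (pderiv P) \<tau> + (1 * poly S \<tau> + poly (pderiv S) \<tau> * (\<tau> - \<tau>))) * poly P \<tau>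
         - (\<alpha> * poly P \<tau> + (\<tau> - \<tau>) * poly S \<tau>) * poly (pderiv P) \<tau>) / (poly P \<tau> * poly P \<tau>)) (at \<tau>)"
      by (rule DERIV_divide[OF dT dP P0])
    have sC: "poly S \<tau> = C * poly P \<tau>" using C(2)[of z2] by (simp add: S_def P_def algebra_simps)
    have "((\<alpha> * poly (pderiv P) \<tau> + (1 * poly S \<tau> + poly (pderiv S) \<tau> * (\<tau> - \<tau>))) * poly P \<tau>
         - (\<alpha> * poly P \<tau> + (\<tau> - \<tau>) * poly S \<tau>) * poly (pderiv P) \<tau>) / (poly P \<tau> * poly P \<tau>)
         = (poly S \<tau> * poly P \<tau>) / (poly P \<tau> * poly P \<tau>)" by (simp add: algebra_simps)
    also have "\<dots> = poly S \<tau> / poly P \<tau>" using P0 by simp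
    also have "\<dots> = C" using sC P0 by simp
    finally have ev: "((\<alpha> * poly (pderiv P) \<tau> + (1 * poly S \<tau> + poly (pderiv S) \<tau> * (\<tau> - \<tau>))) * poly P \<tau>
         - (\<alpha> * poly P \<tau> + (\<tau> - \<tau>) * poly S \<tau>) * poly (pderiv P) \<tau>) / (poly P \<tau> * poly P \<tau>) = C" .
    show ?thesis unfolding fe using dd unfolding ev .
  qed
  show ?thesis
  proof (intro exI[of _ C] conjI allI impI)
    show "C \<noteq> 0" by (rule C(1))
    fix z2 assume a: "norm z2 \<le> 1 \<and> z2 \<noteq> lam"
    show "((\<lambda>w. (poly tp2 w + z2 * poly tp1 w) / (poly p1 w + z2 * poly p2 w)) has_field_derivative C) (at \<tau>)"
      using a by (intro deriv) auto
  qed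
qed

end

theorem lemma3p5:
  fixes n :: nat and p1 p2 :: "complex poly" and \<alpha> :: complex
  defines "tp1 \<equiv> refl_poly n p1" and "tp2 \<equiv> refl_poly n p2"
  defines "p \<equiv> eval2 p1 p2" and "tp \<equiv> eval2 tp2 tp1"
  defines "\<phi> \<equiv> (\<lambda>z1 z2. tp z1 z2 / p z1 z2)"
  assumes n: "n \<ge> 1"
    and deg1: "degree p1 \<le> n" and deg2: "degree p2 \<le> n"
    and nozero: "\<And>z1 z2. norm z1 < 1 \<Longrightarrow> norm z2 < 1 \<Longrightarrow> p z1 z2 \<noteq> 0"
    and tdeg: "tp1 \<noteq> 0" "max (degree tp1) (degree tp2) = n"
    and cop: "coprime [:p1, p2:] [:tp2, tp1:]"
    and alpha: "norm \<alpha> = 1"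
  shows "(\<forall>\<gamma>. norm \<gamma> = 1 \<longrightarrow>
            \<not> ([:[:-\<gamma>, 1:]^2:] dvd [:tp2 - smult \<alpha> p1, tp1 - smult \<alpha> p2:]) \<and>
            \<not> ([:-\<gamma>, 1:]^2 dvd (tp1 - smult \<alpha> p2)))
       \<and> (\<forall>\<tau> lam. norm \<tau> = 1 \<and> norm lam = 1 \<and> p \<tau> lam = 0 \<longrightarrow>
            cnj (Bal p1 p2 tp1 tp2 \<alpha> \<tau>) = lam)
       \<and> (\<forall>\<tau> lam. norm \<tau> = 1 \<and> norm lam = 1 \<and> p \<tau> lam = 0 \<and>
              (\<forall>z2. norm z2 = 1 \<longrightarrow> tp \<tau> z2 = \<alpha> * p \<tau> z2) \<longrightarrow>
            (\<exists>C. C \<noteq> 0 \<and> (\<forall>z2. norm z2 \<le> 1 \<and> z2 \<noteq> lam \<longrightarrow>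
                 ((\<lambda>w. \<phi> w z2) has_field_derivative C) (at \<tau>))))"
proof -
  have pe: "p z1 z2 = poly p1 z1 + z2 * poly p2 z1" for z1 z2 by (simp add: p_def eval2_def)
  have tpe: "tp z1 z2 = poly tp2 z1 + z2 * poly tp1 z1" for z1 z2 by (simp add: tp_def eval2_def)
  interpret R: rif n p1 p2 tp1 tp2 \<alpha>
  proof
    show "degree p1 \<le> n" "degree p2 \<le> n" by (fact deg1, fact deg2)
    show "tp1 = refl_poly n p1" "tp2 = refl_poly n p2" by (simp_all add: tp1_def tp2_def)
    show "poly p1 z1 + z2 * poly p2 z1 \<noteq> 0" if "norm z1 < 1" "norm z2 < 1" for z1 z2
      using nozero[OF that] by (simp add: pe)
    show "tp1 \<noteq> 0" by (fact tdeg(1))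
    show "coprime [:p1, p2:] [:tp2, tp1:]" by (fact cop)
    show "norm \<alpha> = 1" by (fact alpha)
  qed
  have NN: "R.NN = tp1 - smult \<alpha> p2" by (simp add: R.NN_def)
  have I: "\<forall>\<gamma>. norm \<gamma> = 1 \<longrightarrow>
            \<not> ([:[:-\<gamma>, 1:]^2:] dvd [:tp2 - smult \<alpha> p1, tp1 - smult \<alpha> p2:]) \<and>
            \<not> ([:-\<gamma>, 1:]^2 dvd (tp1 - smult \<alpha> p2))"
  proof (intro allI impI conjI)
    fix \<gamma> :: complex assume g: "norm \<gamma> = 1"
    show nd: "\<not> ([:-\<gamma>, 1:]^2 dvd (tp1 - smult \<alpha> p2))" using R.part1[OF g] by (simp add: NN)
    show "\<not> ([:[:-\<gamma>, 1:]^2:] dvd [:tp2 - smult \<alpha> p1, tp1 - smult \<alpha> p2:])"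
      using const_dvd_pair nd by blast
  qed
  have II: "\<forall>\<tau> lam. norm \<tau> = 1 \<and> norm lam = 1 \<and> p \<tau> lam = 0 \<longrightarrow>
            cnj (Bal p1 p2 tp1 tp2 \<alpha> \<tau>) = lam"
    using R.part2 by (simp add: pe)
  have III: "\<forall>\<tau> lam. norm \<tau> = 1 \<and> norm lam = 1 \<and> p \<tau> lam = 0 \<and>
              (\<forall>z2. norm z2 = 1 \<longrightarrow> tp \<tau> z2 = \<alpha> * p \<tau> z2) \<longrightarrow>
            (\<exists>C. C \<noteq> 0 \<and> (\<forall>z2. norm z2 \<le> 1 \<and> z2 \<noteq> lam \<longrightarrow>
                 ((\<lambda>w. \<phi> w z2) has_field_derivative C) (at \<tau>)))"
  proof (intro allI impI)
    fix \<tau> lam assume a: "norm \<tau> = 1 \<and> norm lam = 1 \<and> p \<tau> lam = 0 \<and>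
              (\<forall>z2. norm z2 = 1 \<longrightarrow> tp \<tau> z2 = \<alpha> * p \<tau> z2)"
    have phe: "(\<lambda>w. \<phi> w z2) = (\<lambda>w. (poly tp2 w + z2 * poly tp1 w) / (poly p1 w + z2 * poly p2 w))" for z2
      by (simp add: \<phi>_def pe tpe)
    have "\<exists>C. C \<noteq> 0 \<and> (\<forall>z2. norm z2 \<le> 1 \<and> z2 \<noteq> lam \<longrightarrow>
           ((\<lambda>w. (poly tp2 w + z2 * poly tp1 w) / (poly p1 w + z2 * poly p2 w)) has_field_derivative C) (at \<tau>))"
    proof (rule R.part3)
      show "norm \<tau> = 1" "norm lam = 1" using a by auto
      show "poly p1 \<tau> + lam * poly p2 \<tau> = 0" using a by (simp add: pe)
      show "poly tp2 \<tau> + z2 * poly tp1 \<tau> = \<alpha> * (poly p1 \<tau> + z2 * poly p2 \<tau>)" if "norm z2 = 1" for z2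
        using a that by (simp add: pe tpe)
    qed
    then show "\<exists>C. C \<noteq> 0 \<and> (\<forall>z2. norm z2 \<le> 1 \<and> z2 \<noteq> lam \<longrightarrow>
                 ((\<lambda>w. \<phi> w z2) has_field_derivative C) (at \<tau>))"
      by (simp only: phe)
  qed
  show ?thesis using I II III by blast
qed

end
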